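(* Let $(\vec U_i)_{i\in\mathbb{Z}}$ be a strictly stationary sequence of $d$-dimensional random vectors with c.d.f. $C$ (a copula), whose strong mixing coefficients satisfy $\alpha_r=O(r^{-a})$ for some $a>6$. Let $(\xi_{i,n})_{i\in\mathbb{Z}}$ be a strictly stationary sequence, independent of $(\vec U_i)$, with $\mathrm E(\xi_{0,n})=0$, $\mathrm E(\xi_{0,n}^2)>0$ and $\sup_{n\ge1}\mathrm E(|\xi_{0,n}|^\nu)<\infty$ for all $\nu\ge1$. For $(s,t]\subset[0,1]$ and $A=(u_1,v_1]\times\dots\times(u_d,v_d]\subset[0,1]^d$, let $$\tilde{\mathbb{B}}_n((s,t]\times A)=\frac1{\sqrt n}\sum_{i=\lfloor ns\rfloor+1}^{\lfloor nt\rfloor}\xi_{i,n}\{\mathbf 1(\vec U_i\in A)-\nu(A)\},\qquad \nu(A)=P(\vec U_1\in A).$$ Then for any $q\in(2a/(a-3),4)$ there is a constant $\kappa>0$ such that for all $n$, all $(s,t]\subset[0,1]$ and all such $A$, $$\mathrm E\big[\{\tilde{\mathbb{B}}_n((s,t]\times A)\}^4\big]\le\kappa\big[\lambda_n(s,t)^2\{\nu(A)\}^{4/q}+n^{-1}\lambda_n(s,t)\{\nu(A)\}^{2/q}\big].$$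
   Context: $\lambda_n(s,t)=(\lfloor nt\rfloor-\lfloor ns\rfloor)/n$. Strong mixing coefficients: $\alpha_r=\sup_p\sup_{A\in\mathcal F_{-\infty}^p,B\in\mathcal F_{p+r}^\infty}|P(A\cap B)-P(A)P(B)|$, $\mathcal F_a^b=\sigma(\vec U_i:a\le i\le b)$. *)

theory Defs
  imports "HOL-Probability.Probability"
begin

definition gen_events :: "'a measure \<Rightarrow> (int \<Rightarrow> 'a \<Rightarrow> 'b::topological_space) \<Rightarrow> int set \<Rightarrow> 'a set set" where
  "gen_events M X I = sigma_sets (space M) (\<Union>i\<in>I. {X i -` B \<inter> space M | B. B \<in> sets borel})"

definition strictly_stationary :: "'a measure \<Rightarrow> (int \<Rightarrow> 'a \<Rightarrow> 'b::topological_space) \<Rightarrow> bool" where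
  "strictly_stationary M X \<longleftrightarrow>
     (\<forall>k J. finite J \<longrightarrow>
        distr M (PiM J (\<lambda>_. borel)) (\<lambda>\<omega>. \<lambda>i\<in>J. X (i + k) \<omega>)
      = distr M (PiM J (\<lambda>_. borel)) (\<lambda>\<omega>. \<lambda>i\<in>J. X i \<omega>))"

definition mixing_coeff :: "'a measure \<Rightarrow> (int \<Rightarrow> 'a \<Rightarrow> 'b::topological_space) \<Rightarrow> nat \<Rightarrow> real" where
  "mixing_coeff M X r = Sup {\<bar>measure M (A \<inter> B) - measure M A * measure M B\<bar> | p A B.
       A \<in> gen_events M X {..p} \<and> B \<in> gen_events M X {p + int r..}}"

definition box_oc :: "real ^ 'd \<Rightarrow> real ^ 'd \<Rightarrow> (real ^ 'd) set" where
  "box_oc u v = {x. \<forall>j. u $ j < x $ j \<and> x $ j \<le> v $ j}"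

definition lambda_n :: "nat \<Rightarrow> real \<Rightarrow> real \<Rightarrow> real" where
  "lambda_n n s t = real_of_int (\<lfloor>real n * t\<rfloor> - \<lfloor>real n * s\<rfloor>) / real n"

definition Btilde :: "'a measure \<Rightarrow> (int \<Rightarrow> 'a \<Rightarrow> real ^ 'd) \<Rightarrow> (nat \<Rightarrow> int \<Rightarrow> 'a \<Rightarrow> real)
    \<Rightarrow> nat \<Rightarrow> real \<Rightarrow> real \<Rightarrow> (real ^ 'd) set \<Rightarrow> 'a \<Rightarrow> real" where
  "Btilde M U Xi n s t A \<omega> =
     (\<Sum>i\<in>{\<lfloor>real n * s\<rfloor><..\<lfloor>real n * t\<rfloor>}.
        Xi n i \<omega> * (indicator A (U i \<omega>) - measure M {\<omega>'\<in>space M. U 1 \<omega>' \<in> A})) / sqrt (real n)"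

end

theory Submission
  imports Defs
begin

locale mixsetup = prob_space M for M :: "'a measure" +
  fixes U :: "int \<Rightarrow> 'a \<Rightarrow> real ^ 'd" and A :: "(real ^ 'd) set" and K a :: real
  assumes U_meas: "\<And>i. U i \<in> borel_measurable M"
    and A_borel: "A \<in> sets borel"
    and Kpos: "K \<ge> 0" and a_pos: "0 < a"
    and probE: "\<And>i. prob {\<omega>\<in>space M. U i \<omega> \<in> A} = prob {\<omega>\<in>space M. U 1 \<omega> \<in> A}"
    and mix: "\<And>p r C D. r \<ge> 1 \<Longrightarrow> C \<in> gen_events M U {..p} \<Longrightarrow> D \<in> gen_events M U {p + int r..}
        \<Longrightarrow> \<bar>prob (C \<inter> D) - prob C * prob D\<bar> \<le> K * real r powr (-a)"
begin

definition "E i = {\<omega>\<in>space M. U i \<omega> \<in> A}"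
definition "nu = prob (E 1)"
definition "Y i \<omega> = indicator (E i) \<omega> - nu"
definition "PY L \<omega> = prod_list (map (\<lambda>k. Y k \<omega>) L)"

lemma E_sets[measurable]: "E i \<in> sets M"
  unfolding E_def using U_meas A_borel by measurable

lemma probE': "prob (E i) = nu"
  using probE unfolding E_def nu_def by auto

lemma nu_ge: "0 \<le> nu" and nu_le: "nu \<le> 1"
  unfolding nu_def by auto

lemma Y_meas[measurable]: "Y i \<in> borel_measurable M"
  unfolding Y_def by measurable

lemma Y_bound: "\<bar>Y i \<omega>\<bar> \<le> 1"
  using nu_ge nu_le by (auto simp: Y_def indicator_def)

lemma PY_meas[measurable]: "PY L \<in> borel_measurable M"
  by (induction L) (auto simp: PY_def)

lemma PY_bound: "\<bar>PY L \<omega>\<bar> \<le> 1"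
proof (induction L)
  case Nil then show ?case by (simp add: PY_def)
next
  case (Cons k L)
  have "\<bar>PY (k#L) \<omega>\<bar> = \<bar>Y k \<omega>\<bar> * \<bar>PY L \<omega>\<bar>" by (simp add: PY_def abs_mult)
  also have "\<dots> \<le> 1 * 1" using Cons Y_bound by (intro mult_mono) auto
  finally show ?case by simp
qed

lemma PY_Cons: "PY (k#L) \<omega> = Y k \<omega> * PY L \<omega>" by (simp add: PY_def)

lemma int_bounded:
  fixes B :: real
  assumes "f \<in> borel_measurable M" "\<And>\<omega>. \<bar>f \<omega>\<bar> \<le> B"
  shows "integrable M f"
  using assms by (intro integrable_const_bound[where B=B]) auto

lemma gen_sets: "gen_events M U I \<subseteq> sets M"
  unfolding gen_events_def
  by (intro sigma_algebra.sigma_sets_subset[OF sets.sigma_algebra_axioms]) (use U_meas in auto)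

lemma E_gen: "i \<in> I \<Longrightarrow> E i \<in> gen_events M U I"
  unfolding gen_events_def E_def
  by (rule sigma_sets.Basic) (use A_borel in \<open>auto intro!: exI[of _ A] exI[of _ i]\<close>)

lemma gen_Int: "C \<in> gen_events M U I \<Longrightarrow> D \<in> gen_events M U I \<Longrightarrow> C \<inter> D \<in> gen_events M U I"
proof -
  have "sigma_algebra (space M) (gen_events M U I)"
    unfolding gen_events_def by (rule sigma_algebra_sigma_sets) auto
  then show "C \<in> gen_events M U I \<Longrightarrow> D \<in> gen_events M U I \<Longrightarrow> C \<inter> D \<in> gen_events M U I"
    by (meson semiring_of_sets.Int ring_of_sets_def algebra_def sigma_algebra_def)
qed


lemma ind_meas: "C \<in> sets M \<Longrightarrow> (\<lambda>\<omega>. indicator C \<omega> :: real) \<in> borel_measurable M"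
  by (rule borel_measurable_indicator)

lemma IPY_meas: "C \<in> sets M \<Longrightarrow> (\<lambda>\<omega>. indicator C \<omega> * PY L \<omega> :: real) \<in> borel_measurable M"
  using ind_meas PY_meas by (rule borel_measurable_times)

lemma IPY_bound: "\<bar>indicator C \<omega> * PY L \<omega> :: real\<bar> \<le> 1"
  using PY_bound[of L \<omega>] by (auto simp: indicator_def)

lemma IPY_int: "C \<in> sets M \<Longrightarrow> integrable M (\<lambda>\<omega>. indicator C \<omega> * PY L \<omega>)"
  by (rule int_bounded[OF IPY_meas IPY_bound])

lemma IPY2_int: "C \<in> sets M \<Longrightarrow> D \<in> sets M \<Longrightarrow>
   integrable M (\<lambda>\<omega>. indicator C \<omega> * PY L \<omega> * (indicator D \<omega> * PY L' \<omega>))"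
  apply (rule int_bounded[where B=1])
   apply (intro borel_measurable_times IPY_meas; assumption)
  using IPY_bound[where C=C and L=L] IPY_bound[where C=D and L=L'] by (simp add: abs_mult mult_le_one)

lemma IPY_Cons: "indicator C \<omega> * PY (k#L) \<omega> = indicator (C \<inter> E k) \<omega> * PY L \<omega> - nu * (indicator C \<omega> * PY L \<omega>)"
  by (simp add: PY_Cons Y_def indicator_inter_arith algebra_simps)

definition cv :: "('a \<Rightarrow> real) \<Rightarrow> ('a \<Rightarrow> real) \<Rightarrow> real" where "cv f g = (\<integral>\<omega>. f \<omega> * g \<omega> \<partial>M) - (\<integral>\<omega>. f \<omega> \<partial>M) * (\<integral>\<omega>. g \<omega> \<partial>M)"

lemma cv_lin2:
  assumes "integrable M f" "integrable M g1" "integrable M g0"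
    "integrable M (\<lambda>\<omega>. f \<omega> * g1 \<omega>)" "integrable M (\<lambda>\<omega>. f \<omega> * g0 \<omega>)"
  shows "cv f (\<lambda>\<omega>. g1 \<omega> - c * g0 \<omega>) = cv f g1 - c * cv f g0"
proof -
  have "(\<integral>\<omega>. f \<omega> * (g1 \<omega> - c * g0 \<omega>) \<partial>M) = (\<integral>\<omega>. f \<omega> * g1 \<omega> - c * (f \<omega> * g0 \<omega>) \<partial>M)"
    by (intro Bochner_Integration.integral_cong) (auto simp: algebra_simps)
  also have "\<dots> = (\<integral>\<omega>. f \<omega> * g1 \<omega> \<partial>M) - c * (\<integral>\<omega>. f \<omega> * g0 \<omega> \<partial>M)"
    using assms by simp
  finally show ?thesis using assms by (simp add: cv_def algebra_simps)
qed

lemma cv_lin1: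
  assumes "integrable M g" "integrable M f1" "integrable M f0"
    "integrable M (\<lambda>\<omega>. f1 \<omega> * g \<omega>)" "integrable M (\<lambda>\<omega>. f0 \<omega> * g \<omega>)"
  shows "cv (\<lambda>\<omega>. f1 \<omega> - c * f0 \<omega>) g = cv f1 g - c * cv f0 g"
proof -
  have "(\<integral>\<omega>. (f1 \<omega> - c * f0 \<omega>) * g \<omega> \<partial>M) = (\<integral>\<omega>. f1 \<omega> * g \<omega> - c * (f0 \<omega> * g \<omega>) \<partial>M)"
    by (intro Bochner_Integration.integral_cong) (auto simp: algebra_simps)
  also have "\<dots> = (\<integral>\<omega>. f1 \<omega> * g \<omega> \<partial>M) - c * (\<integral>\<omega>. f0 \<omega> * g \<omega> \<partial>M)"
    using assms by simp
  finally show ?thesis using assms by (simp add: cv_def algebra_simps)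
qed

lemma cov_bound0:
  fixes p :: int and r :: nat
  assumes r: "r \<ge> 1" and F: "\<forall>k\<in>set F. k \<ge> p + int r"
    and C: "C \<in> gen_events M U {..p}" and D: "D \<in> gen_events M U {p + int r..}"
  shows "\<bar>cv (\<lambda>\<omega>. indicator C \<omega>) (\<lambda>\<omega>. indicator D \<omega> * PY F \<omega>)\<bar> \<le> 2^(length F) * (K * real r powr (-a))"
  using F D
proof (induction F arbitrary: D)
  case Nil
  have Cs: "C \<in> sets M" and Ds: "D \<in> sets M" using C Nil gen_sets by auto
  have "cv (\<lambda>\<omega>. indicator C \<omega>) (\<lambda>\<omega>. indicator D \<omega> * PY [] \<omega>) = prob (C \<inter> D) - prob C * prob D"
    using Cs Ds by (simp add: cv_def PY_def indicator_inter_arith[symmetric])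
  then show ?case using mix[OF r C Nil(2)] by simp
next
  case (Cons k F)
  have Cs: "C \<in> sets M" and Ds: "D \<in> sets M" using C Cons gen_sets by auto
  have Ek: "E k \<in> gen_events M U {p + int r..}" using Cons(2) by (intro E_gen) auto
  have DE: "D \<inter> E k \<in> gen_events M U {p + int r..}" by (rule gen_Int[OF Cons(3) Ek])
  have DEs: "D \<inter> E k \<in> sets M" using DE gen_sets by auto
  have eq: "cv (\<lambda>\<omega>. indicator C \<omega>) (\<lambda>\<omega>. indicator D \<omega> * PY (k#F) \<omega>)
     = cv (\<lambda>\<omega>. indicator C \<omega>) (\<lambda>\<omega>. indicator (D \<inter> E k) \<omega> * PY F \<omega>) - nu * cv (\<lambda>\<omega>. indicator C \<omega>) (\<lambda>\<omega>. indicator D \<omega> * PY F \<omega>)"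
    unfolding IPY_Cons
    apply (rule cv_lin2)
    using IPY_int[OF Cs, of "[]"] IPY_int[OF Ds] IPY_int[OF DEs] IPY2_int[OF Cs Ds, of "[]"] IPY2_int[OF Cs DEs, of "[]"]
    by (auto simp: PY_def)
  have IH1: "\<bar>cv (\<lambda>\<omega>. indicator C \<omega>) (\<lambda>\<omega>. indicator (D \<inter> E k) \<omega> * PY F \<omega>)\<bar> \<le> 2^(length F) * (K * real r powr (-a))"
    using Cons DE by auto
  have IH2: "\<bar>cv (\<lambda>\<omega>. indicator C \<omega>) (\<lambda>\<omega>. indicator D \<omega> * PY F \<omega>)\<bar> \<le> 2^(length F) * (K * real r powr (-a))"
    using Cons by auto
  have "\<bar>nu * cv (\<lambda>\<omega>. indicator C \<omega>) (\<lambda>\<omega>. indicator D \<omega> * PY F \<omega>)\<bar> \<le> 1 * (2^(length F) * (K * real r powr (-a)))"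
    unfolding abs_mult using nu_ge nu_le IH2 by (intro mult_mono) auto
  then show ?case unfolding eq using IH1 by simp
qed


lemma cov_bound:
  fixes p :: int and r :: nat
  assumes r: "r \<ge> 1" and P: "\<forall>k\<in>set P. k \<le> p" and F: "\<forall>k\<in>set F. k \<ge> p + int r"
    and C: "C \<in> gen_events M U {..p}" and D: "D \<in> gen_events M U {p + int r..}"
  shows "\<bar>cv (\<lambda>\<omega>. indicator C \<omega> * PY P \<omega>) (\<lambda>\<omega>. indicator D \<omega> * PY F \<omega>)\<bar> \<le> 2^(length P + length F) * (K * real r powr (-a))"
  using P C
proof (induction P arbitrary: C)
  case Nil
  then show ?case using cov_bound0[OF r F Nil(2) D] by (simp add: PY_def)
next
  case (Cons k P)
  have Cs: "C \<in> sets M" and Ds: "D \<in> sets M" using D Cons gen_sets by auto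
  have Ek: "E k \<in> gen_events M U {..p}" using Cons(2) by (intro E_gen) auto
  have CE: "C \<inter> E k \<in> gen_events M U {..p}" by (rule gen_Int[OF Cons(3) Ek])
  have CEs: "C \<inter> E k \<in> sets M" using CE gen_sets by auto
  have eq: "cv (\<lambda>\<omega>. indicator C \<omega> * PY (k#P) \<omega>) (\<lambda>\<omega>. indicator D \<omega> * PY F \<omega>)
     = cv (\<lambda>\<omega>. indicator (C \<inter> E k) \<omega> * PY P \<omega>) (\<lambda>\<omega>. indicator D \<omega> * PY F \<omega>) - nu * cv (\<lambda>\<omega>. indicator C \<omega> * PY P \<omega>) (\<lambda>\<omega>. indicator D \<omega> * PY F \<omega>)"
    unfolding IPY_Cons
    apply (rule cv_lin1)
    using IPY_int[OF Cs] IPY_int[OF Ds] IPY_int[OF CEs] IPY2_int[OF Cs Ds] IPY2_int[OF CEs Ds]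
    by auto
  have IH1: "\<bar>cv (\<lambda>\<omega>. indicator (C \<inter> E k) \<omega> * PY P \<omega>) (\<lambda>\<omega>. indicator D \<omega> * PY F \<omega>)\<bar> \<le> 2^(length P + length F) * (K * real r powr (-a))"
    using Cons CE by auto
  have IH2: "\<bar>cv (\<lambda>\<omega>. indicator C \<omega> * PY P \<omega>) (\<lambda>\<omega>. indicator D \<omega> * PY F \<omega>)\<bar> \<le> 2^(length P + length F) * (K * real r powr (-a))"
    using Cons by auto
  have "\<bar>nu * cv (\<lambda>\<omega>. indicator C \<omega> * PY P \<omega>) (\<lambda>\<omega>. indicator D \<omega> * PY F \<omega>)\<bar> \<le> 1 * (2^(length P + length F) * (K * real r powr (-a)))"
    unfolding abs_mult using nu_ge nu_le IH2 by (intro mult_mono) auto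
  then show ?case unfolding eq using IH1 by simp
qed

lemma cov_PY:
  fixes p :: int and r :: nat
  assumes r: "r \<ge> 1" and P: "\<forall>k\<in>set P. k \<le> p" and F: "\<forall>k\<in>set F. k \<ge> p + int r"
  shows "\<bar>(\<integral>\<omega>. PY (P @ F) \<omega> \<partial>M) - (\<integral>\<omega>. PY P \<omega> \<partial>M) * (\<integral>\<omega>. PY F \<omega> \<partial>M)\<bar> \<le> 2^(length P + length F) * (K * real r powr (-a))"
proof -
  have "space M \<in> gen_events M U {..p}" "space M \<in> gen_events M U {p + int r..}"
    unfolding gen_events_def by (auto intro: sigma_sets_top)
  note cb = cov_bound[OF r P F this]
  have e1: "(\<integral>\<omega>. indicator (space M) \<omega> * PY P \<omega> * (indicator (space M) \<omega> * PY F \<omega>) \<partial>M) = (\<integral>\<omega>. PY (P @ F) \<omega> \<partial>M)"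
    by (intro Bochner_Integration.integral_cong) (auto simp: PY_def)
  have e2: "\<And>L. (\<integral>\<omega>. indicator (space M) \<omega> * PY L \<omega> \<partial>M) = (\<integral>\<omega>. PY L \<omega> \<partial>M)"
    by (intro Bochner_Integration.integral_cong) auto
  show ?thesis using cb unfolding cv_def e1 e2 .
qed


definition "Dn (g::nat) = (if g = 0 then nu else min nu (K * real g powr (-a)))"

lemma Dn_nonneg: "0 \<le> Dn g"
  using nu_ge Kpos by (auto simp: Dn_def)

lemma Dn_le_nu: "Dn g \<le> nu"
  by (auto simp: Dn_def)

lemma int_PY: "integrable M (PY L)"
  by (rule int_bounded[OF PY_meas PY_bound])

lemma PY_triv: "L \<noteq> [] \<Longrightarrow> \<bar>\<integral>\<omega>. PY L \<omega> \<partial>M\<bar> \<le> 2 * nu"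
proof (cases L)
  case (Cons k L')
  have b: "\<bar>PY L \<omega>\<bar> \<le> indicator (E k) \<omega> + nu" for \<omega>
  proof -
    have "\<bar>PY L \<omega>\<bar> = \<bar>Y k \<omega>\<bar> * \<bar>PY L' \<omega>\<bar>" by (simp add: Cons PY_def abs_mult)
    also have "\<dots> \<le> \<bar>Y k \<omega>\<bar> * 1" using PY_bound by (intro mult_left_mono) auto
    also have "\<dots> \<le> indicator (E k) \<omega> + nu" using nu_ge by (auto simp: Y_def indicator_def)
    finally show ?thesis by simp
  qed
  have "\<bar>\<integral>\<omega>. PY L \<omega> \<partial>M\<bar> \<le> (\<integral>\<omega>. \<bar>PY L \<omega>\<bar> \<partial>M)" by (rule integral_abs_bound)
  also have "\<dots> \<le> (\<integral>\<omega>. indicator (E k) \<omega> + nu \<partial>M)"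
    using b int_PY by (intro integral_mono) (auto simp: emeasure_eq_measure)
  also have "\<dots> = (\<integral>\<omega>. indicator (E k) \<omega> \<partial>M) + (\<integral>\<omega>. nu \<partial>M)"
    by (rule Bochner_Integration.integral_add) (auto simp: emeasure_eq_measure)
  also have "\<dots> = prob (E k) + nu" using E_sets[of k] sets.sets_into_space by (simp add: prob_space Int_absorb2)
  finally show ?thesis using probE' by simp
qed simp

lemma EY0: "(\<integral>\<omega>. PY [k] \<omega> \<partial>M) = 0"
proof -
  have "(\<integral>\<omega>. PY [k] \<omega> \<partial>M) = (\<integral>\<omega>. indicator (E k) \<omega> - nu \<partial>M)"
    by (intro Bochner_Integration.integral_cong) (auto simp: PY_def Y_def)
  also have "\<dots> = (\<integral>\<omega>. indicator (E k) \<omega> \<partial>M) - (\<integral>\<omega>. nu \<partial>M)"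
    by (rule Bochner_Integration.integral_diff) (auto simp: emeasure_eq_measure)
  also have "\<dots> = prob (E k) - nu" using E_sets[of k] sets.sets_into_space by (simp add: prob_space Int_absorb2)
  finally show ?thesis using probE' by simp
qed

lemma gapb:
  fixes p :: int
  assumes P: "\<forall>k\<in>set P. k \<le> p" and F: "\<forall>k\<in>set F. k \<ge> p + int g" and ne: "P \<noteq> []"
    and len: "length P + length F \<le> 4"
  shows "\<bar>\<integral>\<omega>. PY (P @ F) \<omega> \<partial>M\<bar> \<le> 16 * Dn g + \<bar>\<integral>\<omega>. PY P \<omega> \<partial>M\<bar> * \<bar>\<integral>\<omega>. PY F \<omega> \<partial>M\<bar>"
proof -
  have t: "\<bar>\<integral>\<omega>. PY (P @ F) \<omega> \<partial>M\<bar> \<le> 2 * nu" using PY_triv ne by simp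
  show ?thesis
  proof (cases "g = 0")
    case True
    have z: "0 \<le> \<bar>\<integral>\<omega>. PY P \<omega> \<partial>M\<bar> * \<bar>\<integral>\<omega>. PY F \<omega> \<partial>M\<bar>" by simp
    have "Dn g = nu" using True by (simp add: Dn_def)
    then show ?thesis using t nu_ge z by linarith
  next
    case False
    have c: "\<bar>(\<integral>\<omega>. PY (P @ F) \<omega> \<partial>M) - (\<integral>\<omega>. PY P \<omega> \<partial>M) * (\<integral>\<omega>. PY F \<omega> \<partial>M)\<bar> \<le> 2^(length P + length F) * (K * real g powr (-a))"
      using cov_PY[OF _ P F] False by simp
    have "(2::real)^(length P + length F) \<le> 2^4" using len by (intro power_increasing) auto
    then have c2: "\<bar>(\<integral>\<omega>. PY (P @ F) \<omega> \<partial>M) - (\<integral>\<omega>. PY P \<omega> \<partial>M) * (\<integral>\<omega>. PY F \<omega> \<partial>M)\<bar> \<le> 16 * (K * real g powr (-a))"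
      using order_trans[OF c mult_right_mono[OF \<open>(2::real)^(length P + length F) \<le> 2^4\<close>]] Kpos by simp
    show ?thesis
    proof (cases "nu \<le> K * real g powr (-a)")
      case True
      have z: "0 \<le> \<bar>\<integral>\<omega>. PY P \<omega> \<partial>M\<bar> * \<bar>\<integral>\<omega>. PY F \<omega> \<partial>M\<bar>" by simp
      have "Dn g = nu" using True False by (simp add: Dn_def)
      then show ?thesis using t nu_ge z by linarith
    next
      case f2: False
      then have "Dn g = K * real g powr (-a)" using False by (simp add: Dn_def)
      moreover have "\<bar>\<integral>\<omega>. PY (P @ F) \<omega> \<partial>M\<bar> \<le> \<bar>(\<integral>\<omega>. PY (P @ F) \<omega> \<partial>M) - (\<integral>\<omega>. PY P \<omega> \<partial>M) * (\<integral>\<omega>. PY F \<omega> \<partial>M)\<bar> + \<bar>\<integral>\<omega>. PY P \<omega> \<partial>M\<bar> * \<bar>\<integral>\<omega>. PY F \<omega> \<partial>M\<bar>"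
        unfolding abs_mult[symmetric] by (metis abs_triangle_ineq diff_add_cancel)
      ultimately show ?thesis using c2 by linarith
    qed
  qed
qed

lemma sorted_bounds:
  fixes s0 s1 s2 s3 :: int
  assumes "s0 \<le> s1" "s1 \<le> s2" "s2 \<le> s3"
  defines "h \<equiv> \<bar>\<integral>\<omega>. PY [s0,s1,s2,s3] \<omega> \<partial>M\<bar>"
  shows "h \<le> 16 * Dn (nat (s1 - s0))" "h \<le> 16 * Dn (nat (s3 - s2))"
    "h \<le> 16 * Dn (nat (s2 - s1)) + (16 * Dn (nat (s1 - s0))) * (16 * Dn (nat (s3 - s2)))"
proof -
  have g1: "\<bar>\<integral>\<omega>. PY ([s0] @ [s1,s2,s3]) \<omega> \<partial>M\<bar> \<le> 16 * Dn (nat (s1 - s0)) + \<bar>\<integral>\<omega>. PY [s0] \<omega> \<partial>M\<bar> * \<bar>\<integral>\<omega>. PY [s1,s2,s3] \<omega> \<partial>M\<bar>"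
    by (rule gapb[where p=s0]) (use assms in auto)
  then show "h \<le> 16 * Dn (nat (s1 - s0))" unfolding h_def EY0 by simp
  have g3: "\<bar>\<integral>\<omega>. PY ([s0,s1,s2] @ [s3]) \<omega> \<partial>M\<bar> \<le> 16 * Dn (nat (s3 - s2)) + \<bar>\<integral>\<omega>. PY [s0,s1,s2] \<omega> \<partial>M\<bar> * \<bar>\<integral>\<omega>. PY [s3] \<omega> \<partial>M\<bar>"
    by (rule gapb[where p=s2]) (use assms in auto)
  then show "h \<le> 16 * Dn (nat (s3 - s2))" unfolding h_def EY0 by simp
  have a0: "\<bar>\<integral>\<omega>. PY ([s0] @ [s1]) \<omega> \<partial>M\<bar> \<le> 16 * Dn (nat (s1 - s0)) + \<bar>\<integral>\<omega>. PY [s0] \<omega> \<partial>M\<bar> * \<bar>\<integral>\<omega>. PY [s1] \<omega> \<partial>M\<bar>"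
    by (rule gapb[where p=s0]) (use assms in auto)
  then have a: "\<bar>\<integral>\<omega>. PY [s0,s1] \<omega> \<partial>M\<bar> \<le> 16 * Dn (nat (s1 - s0))" unfolding EY0 by simp
  have b0: "\<bar>\<integral>\<omega>. PY ([s2] @ [s3]) \<omega> \<partial>M\<bar> \<le> 16 * Dn (nat (s3 - s2)) + \<bar>\<integral>\<omega>. PY [s2] \<omega> \<partial>M\<bar> * \<bar>\<integral>\<omega>. PY [s3] \<omega> \<partial>M\<bar>"
    by (rule gapb[where p=s2]) (use assms in auto)
  then have b: "\<bar>\<integral>\<omega>. PY [s2,s3] \<omega> \<partial>M\<bar> \<le> 16 * Dn (nat (s3 - s2))" unfolding EY0 by simp
  have ab: "\<bar>\<integral>\<omega>. PY [s0,s1] \<omega> \<partial>M\<bar> * \<bar>\<integral>\<omega>. PY [s2,s3] \<omega> \<partial>M\<bar> \<le> (16 * Dn (nat (s1 - s0))) * (16 * Dn (nat (s3 - s2)))"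
    using a b by (intro mult_mono) auto
  have g2: "\<bar>\<integral>\<omega>. PY ([s0,s1] @ [s2,s3]) \<omega> \<partial>M\<bar> \<le> 16 * Dn (nat (s2 - s1)) + \<bar>\<integral>\<omega>. PY [s0,s1] \<omega> \<partial>M\<bar> * \<bar>\<integral>\<omega>. PY [s2,s3] \<omega> \<partial>M\<bar>"
    by (rule gapb[where p=s1]) (use assms in auto)
  then show "h \<le> 16 * Dn (nat (s2 - s1)) + (16 * Dn (nat (s1 - s0))) * (16 * Dn (nat (s3 - s2)))"
    unfolding h_def using ab by simp
qed

end

lemma wlog4:
  fixes P :: "int \<Rightarrow> int \<Rightarrow> int \<Rightarrow> int \<Rightarrow> bool"
  assumes S: "\<And>a b c d. a \<le> b \<Longrightarrow> b \<le> c \<Longrightarrow> c \<le> d \<Longrightarrow> P a b c d"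
   and s12: "\<And>a b c d. P a b c d \<Longrightarrow> P b a c d"
   and s23: "\<And>a b c d. P a b c d \<Longrightarrow> P a c b d"
   and s34: "\<And>a b c d. P a b c d \<Longrightarrow> P a b d c"
  shows "P a b c d"
proof -
  have st1: "P a b c d" if "b \<le> c" "c \<le> d" for a b c d
  proof -
    consider "a \<le> b" | "b \<le> a" "a \<le> c" | "c \<le> a" "a \<le> d" | "d \<le> a" by linarith
    then show ?thesis
    proof cases
      case 1 then show ?thesis using S that by blast
    next
      case 2 then show ?thesis using s12[OF S[of b a c d]] that by blast
    next
      case 3 then show ?thesis using s12[OF s23[OF S[of b c a d]]] that by blast
    next
      case 4 then show ?thesis using s12[OF s23[OF s34[OF S[of b c d a]]]] that by blast
    qed
  qed
  consider "b \<le> c" "c \<le> d" | "b \<le> d" "d \<le> c" | "c \<le> b" "b \<le> d" | "c \<le> d" "d \<le> b"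
    | "d \<le> b" "b \<le> c" | "d \<le> c" "c \<le> b" by linarith
  then show ?thesis
  proof cases
    case 1 then show ?thesis using st1 by blast
  next
    case 2 then show ?thesis using s34[OF st1[of b d c a]] by blast
  next
    case 3 then show ?thesis using s23[OF st1[of c b d a]] by blast
  next
    case 4 then show ?thesis using s23[OF s34[OF st1[of c d b a]]] by blast
  next
    case 5 then show ?thesis using s34[OF s23[OF st1[of d b c a]]] by blast
  next
    case 6 then show ?thesis using s23[OF s34[OF s23[OF st1[of d c b a]]]] by blast
  qed
qed

context mixsetup begin

definition "K3 = K * 3 powr a"
definition "Wn (g::nat) = (if g = 0 then nu else min nu (K3 * real g powr (-a)))"
definition "V g = Wn g powr (1/3)"

lemma K3_nonneg: "0 \<le> K3" using Kpos by (simp add: K3_def)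

lemma Wn_nonneg: "0 \<le> Wn g"
  using nu_ge K3_nonneg by (auto simp: Wn_def)

lemma Dn_anti: "m \<le> n \<Longrightarrow> Dn n \<le> Dn m"
proof -
  assume mn: "m \<le> n"
  show ?thesis
  proof (cases "m = 0")
    case True then show ?thesis using Dn_le_nu by (simp add: Dn_def)
  next
    case False
    have "real n powr (-a) \<le> real m powr (-a)"
      using False mn a_pos by (intro powr_mono2') auto
    then have "K * real n powr (-a) \<le> K * real m powr (-a)" using Kpos by (rule mult_left_mono)
    then show ?thesis using False mn by (auto simp: Dn_def)
  qed
qed

lemma Wn_anti: "m \<le> n \<Longrightarrow> Wn n \<le> Wn m"
proof -
  assume mn: "m \<le> n"
  show ?thesis
  proof (cases "m = 0")
    case True then show ?thesis by (simp add: Wn_def)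
  next
    case False
    have "real n powr (-a) \<le> real m powr (-a)"
      using False mn a_pos by (intro powr_mono2') auto
    then have "K3 * real n powr (-a) \<le> K3 * real m powr (-a)" using K3_nonneg by (rule mult_left_mono)
    then show ?thesis using False mn by (auto simp: Wn_def)
  qed
qed

lemma Dn_le_Wn: assumes "R \<le> 3 * G" shows "Dn G \<le> Wn R"
proof (cases "R = 0")
  case True then show ?thesis using Dn_le_nu by (simp add: Wn_def)
next
  case False
  then have G: "G \<noteq> 0" using assms by auto
  have "real G powr (-a) \<le> (real R / 3) powr (-a)"
    using False assms a_pos by (intro powr_mono2') auto
  also have "(real R / 3) powr (-a) = 3 powr a * real R powr (-a)"
    by (simp add: powr_divide powr_minus_divide)
  finally have "K * real G powr (-a) \<le> K * (3 powr a * real R powr (-a))"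
    using Kpos by (rule mult_left_mono)
  then have "K * real G powr (-a) \<le> K3 * real R powr (-a)" by (simp add: K3_def mult_ac)
  then show ?thesis using False G by (auto simp: Dn_def Wn_def)
qed

lemma cube_bound:
  fixes w y1 y2 y3 :: real
  assumes "0 \<le> w" "w \<le> y1" "w \<le> y2" "w \<le> y3"
  shows "w \<le> y1 powr (1/3) * y2 powr (1/3) * y3 powr (1/3)"
proof -
  have "w = w powr (1/3) * w powr (1/3) * w powr (1/3)"
    using assms(1) by (simp add: powr_add[symmetric])
  also have "\<dots> \<le> y1 powr (1/3) * y2 powr (1/3) * y3 powr (1/3)"
    using assms by (intro mult_mono powr_mono2) auto
  finally show ?thesis .
qed

definition "hq w x y z = \<bar>\<integral>\<omega>. PY [w,x,y,z] \<omega> \<partial>M\<bar>"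
definition "Tq w x y z = V (nat \<bar>x - w\<bar>) * V (nat \<bar>y - w\<bar>) * V (nat \<bar>z - w\<bar>)"
definition "Qq w x y z = Dn (nat \<bar>x - w\<bar>) * Dn (nat \<bar>z - y\<bar>)"
definition "Gs w x y z = Tq w x y z + Tq x w y z + Tq y w x z + Tq z w x y + Qq w x y z + Qq w y x z + Qq w z x y"

lemma V_nonneg: "0 \<le> V g" by (simp add: V_def)

lemma Tq_nonneg: "0 \<le> Tq w x y z" by (simp add: Tq_def V_nonneg)
lemma Qq_nonneg: "0 \<le> Qq w x y z" by (simp add: Qq_def Dn_nonneg)

lemma sorted_main:
  fixes s0 s1 s2 s3 :: int
  assumes o: "s0 \<le> s1" "s1 \<le> s2" "s2 \<le> s3"
  shows "hq s0 s1 s2 s3 \<le> 256 * Gs s0 s1 s2 s3"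
proof -
  define g1 where "g1 = nat (s1 - s0)"
  define g2 where "g2 = nat (s2 - s1)"
  define g3 where "g3 = nat (s3 - s2)"
  define R where "R = g1 + g2 + g3"
  define P where "P = (16 * Dn g1) * (16 * Dn g3)"
  have P0: "0 \<le> P" unfolding P_def using Dn_nonneg by simp
  note sb = sorted_bounds[OF o, folded hq_def g1_def g2_def g3_def]
  have hW: "hq s0 s1 s2 s3 \<le> 16 * Wn R + P"
  proof -
    consider "g2 \<le> g1" "g3 \<le> g1" | "g1 \<le> g2" "g3 \<le> g2" | "g1 \<le> g3" "g2 \<le> g3" by linarith
    then show ?thesis
    proof cases
      case 1
      have "Dn g1 \<le> Wn R" using 1 by (intro Dn_le_Wn) (simp add: R_def)
      then show ?thesis using sb(1) P0 by linarith
    next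
      case 2
      have "Dn g2 \<le> Wn R" using 2 by (intro Dn_le_Wn) (simp add: R_def)
      then show ?thesis using sb(3) P0 by (simp add: P_def)
    next
      case 3
      have "Dn g3 \<le> Wn R" using 3 by (intro Dn_le_Wn) (simp add: R_def)
      then show ?thesis using sb(2) P0 by linarith
    qed
  qed
  have d: "nat \<bar>s1 - s0\<bar> = g1" "nat \<bar>s2 - s0\<bar> = g1 + g2" "nat \<bar>s3 - s0\<bar> = R" "nat \<bar>s3 - s2\<bar> = g3"
    using o by (auto simp: g1_def g2_def g3_def R_def)
  have "Wn R \<le> Tq s0 s1 s2 s3"
    unfolding Tq_def d V_def by (intro cube_bound Wn_nonneg Wn_anti) (auto simp: R_def)
  moreover have "P = 256 * Qq s0 s1 s2 s3" unfolding Qq_def d P_def by simp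
  ultimately have "hq s0 s1 s2 s3 \<le> 256 * (Tq s0 s1 s2 s3 + Qq s0 s1 s2 s3)" using hW Tq_nonneg[of s0 s1 s2 s3] unfolding distrib_left by linarith
  also have "\<dots> \<le> 256 * Gs s0 s1 s2 s3"
    unfolding Gs_def using Tq_nonneg Qq_nonneg by (intro mult_left_mono) (auto intro!: add_nonneg_nonneg)
  finally show ?thesis .
qed

lemma hq_s12: "hq x w y z = hq w x y z" unfolding hq_def PY_def by (simp add: mult_ac)
lemma hq_s23: "hq w y x z = hq w x y z" unfolding hq_def PY_def by (simp add: mult_ac)
lemma hq_s34: "hq w x z y = hq w x y z" unfolding hq_def PY_def by (simp add: mult_ac)

lemma Gs_s12: "Gs x w y z = Gs w x y z"
  unfolding Gs_def Tq_def Qq_def by (simp add: abs_minus_commute mult_ac add_ac)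
lemma Gs_s23: "Gs w y x z = Gs w x y z"
  unfolding Gs_def Tq_def Qq_def by (simp add: abs_minus_commute mult_ac add_ac)
lemma Gs_s34: "Gs w x z y = Gs w x y z"
  unfolding Gs_def Tq_def Qq_def by (simp add: abs_minus_commute mult_ac add_ac)

lemma hq_Gs: "hq w x y z \<le> 256 * Gs w x y z"
  by (rule wlog4[where P="\<lambda>w x y z. hq w x y z \<le> 256 * Gs w x y z"])
     (auto simp: sorted_main hq_s12 hq_s23 hq_s34 Gs_s12 Gs_s23 Gs_s34)

end

lemma sum_dist_le:
  fixes f :: "nat \<Rightarrow> real" and I :: "int set"
  assumes f0: "\<And>n. 0 \<le> f n" and sf: "summable f" and fin: "finite I"
  shows "(\<Sum>x\<in>I. f (nat \<bar>x - y\<bar>)) \<le> 2 * suminf f"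
proof -
  have "(\<Sum>x\<in>I. f (nat \<bar>x - y\<bar>)) = (\<Sum>x\<in>I \<inter> {y..}. f (nat \<bar>x - y\<bar>)) + (\<Sum>x\<in>I - {y..}. f (nat \<bar>x - y\<bar>))"
    using fin by (rule sum.Int_Diff)
  also have "(\<Sum>x\<in>I \<inter> {y..}. f (nat \<bar>x - y\<bar>)) = (\<Sum>x\<in>I \<inter> {y..}. f (nat (x - y)))"
    by (intro sum.cong) auto
  also have "\<dots> = sum f ((\<lambda>x. nat (x - y)) ` (I \<inter> {y..}))"
    by (rule sum.reindex[symmetric, unfolded comp_def]) (auto simp: inj_on_def)
  also have "\<dots> \<le> suminf f" using fin f0 by (intro sum_le_suminf sf) auto
  also have "(\<Sum>x\<in>I - {y..}. f (nat \<bar>x - y\<bar>)) = (\<Sum>x\<in>I - {y..}. f (nat (y - x)))"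
    by (intro sum.cong) auto
  also have "\<dots> = sum f ((\<lambda>x. nat (y - x)) ` (I - {y..}))"
    by (rule sum.reindex[symmetric, unfolded comp_def]) (auto simp: inj_on_def)
  also have "\<dots> \<le> suminf f" using fin f0 by (intro sum_le_suminf sf) auto
  finally show ?thesis by simp
qed

definition S4 :: "int set \<Rightarrow> (int \<Rightarrow> int \<Rightarrow> int \<Rightarrow> int \<Rightarrow> real) \<Rightarrow> real" where
  "S4 I f = (\<Sum>w\<in>I. \<Sum>x\<in>I. \<Sum>y\<in>I. \<Sum>z\<in>I. f w x y z)"

lemma S4_s12: "S4 I f = S4 I (\<lambda>w x y z. f x w y z)"
  unfolding S4_def by (rule sum.swap)
lemma S4_s23: "S4 I f = S4 I (\<lambda>w x y z. f w y x z)"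
  unfolding S4_def by (intro sum.cong refl sum.swap)
lemma S4_s34: "S4 I f = S4 I (\<lambda>w x y z. f w x z y)"
  unfolding S4_def by (intro sum.cong refl sum.swap)

lemma S4_add: "S4 I (\<lambda>w x y z. f w x y z + g w x y z) = S4 I f + S4 I g"
  unfolding S4_def by (simp add: sum.distrib)

lemma S4_mono: "(\<And>w x y z. f w x y z \<le> g w x y z) \<Longrightarrow> S4 I f \<le> S4 I g"
  unfolding S4_def by (intro sum_mono) auto

lemma S4_cmult: "S4 I (\<lambda>w x y z. c * f w x y z) = c * S4 I f"
  unfolding S4_def by (simp add: sum_distrib_left)

context mixsetup begin

lemma S4_Gs: "S4 I Gs = 4 * S4 I Tq + 3 * S4 I Qq"
proof -
  have t2: "S4 I (\<lambda>w x y z. Tq x w y z) = S4 I Tq" using S4_s12[of I "\<lambda>w x y z. Tq x w y z"] by simp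
  have t3: "S4 I (\<lambda>w x y z. Tq y w x z) = S4 I Tq"
    using S4_s23[of I "\<lambda>w x y z. Tq y w x z"] t2 by simp
  have t4: "S4 I (\<lambda>w x y z. Tq z w x y) = S4 I Tq"
    using S4_s34[of I "\<lambda>w x y z. Tq z w x y"] t3 by simp
  have q2: "S4 I (\<lambda>w x y z. Qq w y x z) = S4 I Qq" using S4_s23[of I "\<lambda>w x y z. Qq w y x z"] by simp
  have q3: "S4 I (\<lambda>w x y z. Qq w z x y) = S4 I Qq"
    using S4_s34[of I "\<lambda>w x y z. Qq w z x y"] q2 by simp
  have "S4 I Gs = S4 I Tq + S4 I (\<lambda>w x y z. Tq x w y z) + S4 I (\<lambda>w x y z. Tq y w x z) + S4 I (\<lambda>w x y z. Tq z w x y)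
     + S4 I Qq + S4 I (\<lambda>w x y z. Qq w y x z) + S4 I (\<lambda>w x y z. Qq w z x y)"
    unfolding Gs_def S4_def by (simp add: sum.distrib)
  then show ?thesis using t2 t3 t4 q2 q3 by simp
qed

lemma S4_Tq:
  assumes fin: "finite I" and sV: "summable V"
  shows "S4 I Tq \<le> real (card I) * (2 * suminf V)^3"
proof -
  have "S4 I Tq = (\<Sum>w\<in>I. (\<Sum>x\<in>I. V (nat \<bar>x - w\<bar>)) * (\<Sum>y\<in>I. V (nat \<bar>y - w\<bar>)) * (\<Sum>z\<in>I. V (nat \<bar>z - w\<bar>)))"
    unfolding S4_def Tq_def by (simp add: sum_distrib_left sum_distrib_right mult_ac)
  also have "\<dots> \<le> (\<Sum>w\<in>I. (2 * suminf V) * (2 * suminf V) * (2 * suminf V))"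
    using sum_dist_le[OF V_nonneg sV fin] V_nonneg suminf_nonneg[OF sV V_nonneg]
    by (intro sum_mono mult_mono) (auto intro!: sum_nonneg mult_nonneg_nonneg)
  finally show ?thesis by (simp add: power3_eq_cube)
qed

lemma S4_Qq:
  assumes fin: "finite I" and sD: "summable Dn"
  shows "S4 I Qq \<le> (real (card I) * (2 * suminf Dn))^2"
proof -
  have "S4 I Qq = (\<Sum>w\<in>I. \<Sum>x\<in>I. Dn (nat \<bar>x - w\<bar>) * (\<Sum>y\<in>I. \<Sum>z\<in>I. Dn (nat \<bar>z - y\<bar>)))"
    unfolding S4_def Qq_def by (simp only: sum_distrib_left)
  also have "\<dots> = (\<Sum>w\<in>I. \<Sum>x\<in>I. Dn (nat \<bar>x - w\<bar>)) * (\<Sum>y\<in>I. \<Sum>z\<in>I. Dn (nat \<bar>z - y\<bar>))"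
    by (simp only: sum_distrib_right)
  also have "\<dots> \<le> (\<Sum>w\<in>I. 2 * suminf Dn) * (\<Sum>y\<in>I. 2 * suminf Dn)"
    using sum_dist_le[OF Dn_nonneg sD fin] suminf_nonneg[OF sD Dn_nonneg]
    by (intro sum_mono mult_mono) (auto intro!: sum_nonneg Dn_nonneg)
  finally show ?thesis by (simp add: power2_eq_square)
qed

end

lemma min_interp:
  fixes x y th :: real
  assumes "0 \<le> x" "0 \<le> y" "0 \<le> th" "th \<le> 1"
  shows "min x y \<le> x powr th * y powr (1 - th)"
proof (cases "x \<le> y")
  case True
  have "min x y = x powr th * x powr (1 - th)" using True assms by (simp add: powr_add[symmetric] powr_one)
  also have "\<dots> \<le> x powr th * y powr (1 - th)" using True assms by (intro mult_left_mono powr_mono2) auto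
  finally show ?thesis .
next
  case False
  have "min x y = y powr th * y powr (1 - th)" using False assms by (simp add: powr_add[symmetric] powr_one)
  also have "\<dots> \<le> x powr th * y powr (1 - th)" using False assms by (intro mult_right_mono powr_mono2) auto
  finally show ?thesis .
qed

lemma phi_bound:
  fixes nu Kx a th e :: real
  assumes nu: "0 \<le> nu" "nu \<le> 1" and Kx: "0 \<le> Kx" and th: "0 < th" "th < 1" and e: "0 < e" "e \<le> 1"
    and a: "0 < a"
  shows "(if g = 0 then nu else min nu (Kx * real g powr (-a))) powr e
     \<le> nu powr (th * e) * (0 ^ g + Kx powr ((1 - th) * e) * real g powr (- ((1 - th) * a * e)))"
proof (cases "g = 0")
  case True
  have "nu powr e \<le> nu powr (th * e)" using nu th e by (intro powr_mono') (auto simp: mult_le_cancel_right1)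
  then show ?thesis using True by simp
next
  case False
  have "min nu (Kx * real g powr (-a)) powr e \<le> (nu powr th * (Kx * real g powr (-a)) powr (1 - th)) powr e"
    using nu Kx th e by (intro powr_mono2 min_interp) auto
  also have "\<dots> = nu powr (th * e) * (Kx powr ((1 - th) * e) * real g powr (- ((1 - th) * a * e)))"
    by (simp add: powr_mult powr_powr mult_ac)
  finally show ?thesis using False by (simp add: zero_power)
qed

lemma phi_sum:
  fixes nu Kx a th e :: real
  assumes nu: "0 \<le> nu" "nu \<le> 1" and Kx: "0 \<le> Kx" and th: "0 < th" "th < 1" and e: "0 < e" "e \<le> 1"
    and a: "0 < a" and p: "(1 - th) * a * e > 1"
  defines "f \<equiv> \<lambda>g::nat. (if g = 0 then nu else min nu (Kx * real g powr (-a))) powr e"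
  shows "summable f" "suminf f \<le> nu powr (th * e) * (1 + Kx powr ((1 - th) * e) * (\<Sum>g. real g powr (- ((1 - th) * a * e))))"
proof -
  define b where "b = (\<lambda>g::nat. nu powr (th * e) * (0 ^ g + Kx powr ((1 - th) * e) * real g powr (- ((1 - th) * a * e))))"
  have sz: "summable (\<lambda>g::nat. real g powr (- ((1 - th) * a * e)))"
    using p by (subst summable_real_powr_iff) auto
  have sb: "summable b" unfolding b_def
    by (intro summable_mult summable_add summable_zero_power sz)
  have fb: "f g \<le> b g" for g unfolding f_def b_def by (rule phi_bound[OF nu Kx th e a])
  show sf: "summable f"
    by (rule summable_comparison_test'[OF sb, of 0]) (use fb in \<open>auto simp: f_def\<close>)
  have "suminf f \<le> suminf b" by (rule suminf_le[OF fb sf sb])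
  also have "suminf b = nu powr (th * e) * (1 + Kx powr ((1 - th) * e) * (\<Sum>g. real g powr (- ((1 - th) * a * e))))"
  proof -
    have z: "(\<Sum>g. (0::real) ^ g) = 1" using suminf_geometric[of "0::real"] by simp
    show ?thesis unfolding b_def
      by (subst suminf_mult, intro summable_add summable_zero_power summable_mult sz)
         (subst suminf_add[symmetric], simp, intro summable_mult sz, simp add: suminf_mult sz z)
  qed
  finally show "suminf f \<le> nu powr (th * e) * (1 + Kx powr ((1 - th) * e) * (\<Sum>g. real g powr (- ((1 - th) * a * e))))" .
qed

context mixsetup begin

definition "cD th = 1 + K powr ((1 - th) * 1) * (\<Sum>g. real g powr (- ((1 - th) * a * 1)))"
definition "cV th = 1 + K3 powr ((1 - th) * (1/3)) * (\<Sum>g. real g powr (- ((1 - th) * a * (1/3))))"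

lemma Dn_sum:
  assumes th: "0 < th" "th < 1" and p: "(1 - th) * a > 3"
  shows "summable Dn" "suminf Dn \<le> nu powr th * cD th"
proof -
  have eq: "(\<lambda>g. (if g = 0 then nu else min nu (K * real g powr (-a))) powr 1) = Dn"
    using Dn_nonneg by (auto simp: Dn_def fun_eq_iff)
  note ps = phi_sum[OF nu_ge nu_le Kpos th, of 1 a, unfolded eq, simplified]
  show "summable Dn" using ps p a_pos by auto
  show "suminf Dn \<le> nu powr th * cD th" using ps p a_pos by (auto simp: cD_def)
qed

lemma V_sum:
  assumes th: "0 < th" "th < 1" and p: "(1 - th) * a > 3"
  shows "summable V" "suminf V \<le> nu powr (th * (1/3)) * cV th"
proof -
  have eq: "(\<lambda>g. (if g = 0 then nu else min nu (K3 * real g powr (-a))) powr (1/3)) = V"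
    by (auto simp: V_def Wn_def fun_eq_iff)
  have p3: "(1 - th) * a * (1/3) > 1" using p by simp
  note ps = phi_sum[OF nu_ge nu_le K3_nonneg th, of "1/3" a, unfolded eq, OF _ _ a_pos p3]
  show "summable V" using ps by auto
  show "suminf V \<le> nu powr (th * (1/3)) * cV th" using ps by (auto simp: cV_def)
qed

lemma S4_hq_bound:
  assumes fin: "finite I" and th: "0 < th" "th < 1" and p: "(1 - th) * a > 3"
  shows "S4 I hq \<le> 256 * (32 * real (card I) * (cV th)^3 * nu powr th + 12 * (real (card I))^2 * (cD th)^2 * (nu powr th)^2)"
proof -
  note DS = Dn_sum[OF th p] and VS = V_sum[OF th p]
  define m where "m = real (card I)"
  have m0: "0 \<le> m" by (simp add: m_def)
  have SV0: "0 \<le> suminf V" by (rule suminf_nonneg[OF VS(1) V_nonneg])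
  have SD0: "0 \<le> suminf Dn" by (rule suminf_nonneg[OF DS(1) Dn_nonneg])
  have cube: "(nu powr (th * (1/3)))^3 = nu powr th"
  proof (cases "nu = 0")
    case True then show ?thesis using th by simp
  next
    case False then show ?thesis by (simp add: powr_power)
  qed
  have "S4 I hq \<le> S4 I (\<lambda>w x y z. 256 * Gs w x y z)" by (intro S4_mono hq_Gs)
  also have "\<dots> = 256 * (4 * S4 I Tq + 3 * S4 I Qq)" by (simp add: S4_cmult S4_Gs)
  also have "S4 I Tq \<le> m * (2 * suminf V)^3" using S4_Tq[OF fin VS(1)] by (simp add: m_def)
  also have "\<dots> \<le> m * (2 * (nu powr (th * (1/3)) * cV th))^3"
    using VS(2) SV0 m0 by (intro mult_left_mono power_mono) auto
  also have "\<dots> = 8 * m * (cV th)^3 * nu powr th" by (simp add: power_mult_distrib cube[symmetric])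
  also have "S4 I Qq \<le> (m * (2 * suminf Dn))^2" using S4_Qq[OF fin DS(1)] by (simp add: m_def)
  also have "\<dots> \<le> (m * (2 * (nu powr th * cD th)))^2"
    using DS(2) SD0 m0 by (intro power_mono mult_left_mono) auto
  also have "\<dots> = 4 * m^2 * (cD th)^2 * (nu powr th)^2" by (simp add: power_mult_distrib)
  finally show ?thesis by (simp add: m_def)
qed

end

definition genM :: "'a measure \<Rightarrow> (int \<Rightarrow> 'a \<Rightarrow> 'b::topological_space) \<Rightarrow> 'a measure" where
  "genM M X = sigma (space M) (\<Union>i\<in>UNIV. {X i -` B \<inter> space M | B. B \<in> sets borel})"

lemma genM_sets: "sets (genM M X) = gen_events M X UNIV"
  unfolding genM_def gen_events_def by (rule sets_measure_of) auto

lemma genM_space: "space (genM M X) = space M"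
  unfolding genM_def by (rule space_measure_of) auto

lemma genM_meas: "X i \<in> borel_measurable (genM M X)"
proof (rule measurableI)
  fix B :: "'b set" assume "B \<in> sets borel"
  then show "X i -` B \<inter> space (genM M X) \<in> sets (genM M X)"
    unfolding genM_sets genM_space gen_events_def by (intro sigma_sets.Basic) auto
qed auto

lemma (in prob_space) indep_int:
  fixes X :: "int \<Rightarrow> 'a \<Rightarrow> 'b::topological_space" and Z :: "int \<Rightarrow> 'a \<Rightarrow> 'c::topological_space"
    and F G :: "'a \<Rightarrow> real"
  assumes ind: "indep_set (gen_events M X UNIV) (gen_events M Z UNIV)"
    and F: "F \<in> borel_measurable (genM M X)" "F \<in> borel_measurable M" "integrable M F"
    and G: "G \<in> borel_measurable (genM M Z)" "G \<in> borel_measurable M" "integrable M G"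
  shows "integrable M (\<lambda>\<omega>. F \<omega> * G \<omega>)" "(\<integral>\<omega>. F \<omega> * G \<omega> \<partial>M) = (\<integral>\<omega>. F \<omega> \<partial>M) * (\<integral>\<omega>. G \<omega> \<partial>M)"
proof -
  have s1: "sigma_sets (space M) {F -` A \<inter> space M | A. A \<in> sets borel} \<subseteq> gen_events M X UNIV"
  proof -
    have "{F -` A \<inter> space M | A. A \<in> sets borel} \<subseteq> sets (genM M X)"
      using F(1) unfolding genM_space[symmetric, of M X] by (auto intro: measurable_sets)
    then show ?thesis
      using sigma_algebra.sigma_sets_subset[OF sets.sigma_algebra_axioms[of "genM M X"]]
      unfolding genM_space genM_sets by blast
  qed
  have s2: "sigma_sets (space M) {G -` A \<inter> space M | A. A \<in> sets borel} \<subseteq> gen_events M Z UNIV"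
  proof -
    have "{G -` A \<inter> space M | A. A \<in> sets borel} \<subseteq> sets (genM M Z)"
      using G(1) unfolding genM_space[symmetric, of M Z] by (auto intro: measurable_sets)
    then show ?thesis
      using sigma_algebra.sigma_sets_subset[OF sets.sigma_algebra_axioms[of "genM M Z"]]
      unfolding genM_space genM_sets by blast
  qed
  have "indep_set (sigma_sets (space M) {F -` A \<inter> space M | A. A \<in> sets borel}) (sigma_sets (space M) {G -` A \<inter> space M | A. A \<in> sets borel})"
    using ind unfolding indep_set_def
    by (rule indep_sets_mono_sets) (use s1 s2 in \<open>auto split: bool.split\<close>)
  then have iv: "indep_var borel F borel G"
    unfolding indep_var_eq using F(2) G(2) by auto
  show "integrable M (\<lambda>\<omega>. F \<omega> * G \<omega>)" by (rule indep_var_integrable[OF iv F(3) G(3)])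
  show "(\<integral>\<omega>. F \<omega> * G \<omega> \<partial>M) = (\<integral>\<omega>. F \<omega> \<partial>M) * (\<integral>\<omega>. G \<omega> \<partial>M)"
    by (rule indep_var_lebesgue_integral[OF iv F(3) G(3)])
qed

lemma am2: fixes a b :: real shows "\<bar>a * b\<bar> \<le> (a^2 + b^2) / 2"
proof -
  have "0 \<le> (\<bar>a\<bar> - \<bar>b\<bar>)^2" by simp
  then have "2 * (\<bar>a\<bar> * \<bar>b\<bar>) \<le> \<bar>a\<bar>^2 + \<bar>b\<bar>^2" by (simp add: power2_diff)
  then show ?thesis by (simp add: abs_mult)
qed
lemma sq_avg: fixes p q :: real shows "((p + q) / 2)^2 \<le> (p^2 + q^2) / 2"
proof -
  have "0 \<le> (p - q)^2" by simp
  then show ?thesis by (simp add: power2_diff power2_sum field_simps)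
qed
lemma amgm4:
  fixes a b c d :: real
  shows "\<bar>a * b * c * d\<bar> \<le> (a^4 + b^4 + c^4 + d^4) / 4"
proof -
  have e: "x^4 = (x^2)^2" for x :: real by (simp add: power_mult[symmetric])
  define P where "P = (a^2 + b^2) / 2"
  define Q where "Q = (c^2 + d^2) / 2"
  define L where "L = \<bar>a * b * c * d\<bar>"
  have "L = \<bar>a * b\<bar> * \<bar>c * d\<bar>" by (simp add: abs_mult L_def)
  also have "\<dots> \<le> P * Q" unfolding P_def Q_def using am2[of a b] am2[of c d] by (intro mult_mono) auto
  also have "\<dots> \<le> (P^2 + Q^2) / 2"
    using am2[of P Q] by simp
  finally have h1: "L \<le> (P^2 + Q^2) / 2" .
  have h2: "P^2 \<le> (a^4 + b^4) / 2" unfolding e P_def by (rule sq_avg)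
  have h3: "Q^2 \<le> (c^4 + d^4) / 2" unfolding e Q_def by (rule sq_avg)
  define A4 where "A4 = a^4 + b^4" 
  define C4 where "C4 = c^4 + d^4"
  have "P^2 + Q^2 \<le> A4/2 + C4/2" using h2 h3 unfolding A4_def[symmetric] C4_def[symmetric] by (rule add_mono)
  then have "(P^2 + Q^2) / 2 \<le> (A4/2 + C4/2) / 2" by (rule divide_right_mono) simp
  with h1 have "L \<le> (A4/2 + C4/2) / 2" by (rule order_trans)
  then have "L \<le> (A4 + C4) / 4" by simp
  then show ?thesis by (simp add: L_def A4_def C4_def add.assoc)
qed

locale xisetup = mixsetup M U A K a for M :: "'a measure" and U :: "int \<Rightarrow> 'a \<Rightarrow> real ^ 'd" and A K a +
  fixes Xi :: "int \<Rightarrow> 'a \<Rightarrow> real" and m4 :: real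
  assumes Xi_meas: "\<And>i. Xi i \<in> borel_measurable M"
    and Xi4_int: "\<And>i. integrable M (\<lambda>\<omega>. (Xi i \<omega>)^4)"
    and Xi4_eq: "\<And>i. (\<integral>\<omega>. (Xi i \<omega>)^4 \<partial>M) = m4"
    and Xi_indep: "indep_set (gen_events M Xi UNIV) (gen_events M U UNIV)"
begin

lemma Y_genM: "Y i \<in> borel_measurable (genM M U)"
proof -
  have "E i \<in> sets (genM M U)" unfolding genM_sets by (rule E_gen) auto
  then show ?thesis unfolding Y_def by measurable
qed

lemma PY_genM: "PY L \<in> borel_measurable (genM M U)"
  by (induction L) (auto simp: PY_def intro!: borel_measurable_times Y_genM)

definition "X4 w x y z \<omega> = Xi w \<omega> * Xi x \<omega> * Xi y \<omega> * Xi z \<omega>"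

lemma X4_meas: "X4 w x y z \<in> borel_measurable M"
  unfolding X4_def using Xi_meas by (intro borel_measurable_times) auto

lemma X4_genM: "X4 w x y z \<in> borel_measurable (genM M Xi)"
  unfolding X4_def using genM_meas[of Xi] by (intro borel_measurable_times) auto

lemma X4_int: "integrable M (X4 w x y z)"
proof (rule Bochner_Integration.integrable_bound[OF _ X4_meas])
  show "integrable M (\<lambda>\<omega>. ((Xi w \<omega>)^4 + (Xi x \<omega>)^4 + (Xi y \<omega>)^4 + (Xi z \<omega>)^4) / 4)"
    using Xi4_int by auto
  show "AE \<omega> in M. norm (X4 w x y z \<omega>) \<le> norm (((Xi w \<omega>)^4 + (Xi x \<omega>)^4 + (Xi y \<omega>)^4 + (Xi z \<omega>)^4) / 4)"
    using amgm4 by (auto simp: X4_def)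
qed

lemma X4_bound: "\<bar>\<integral>\<omega>. X4 w x y z \<omega> \<partial>M\<bar> \<le> m4"
proof -
  have "\<bar>\<integral>\<omega>. X4 w x y z \<omega> \<partial>M\<bar> \<le> (\<integral>\<omega>. \<bar>X4 w x y z \<omega>\<bar> \<partial>M)" by (rule integral_abs_bound)
  also have "\<dots> \<le> (\<integral>\<omega>. ((Xi w \<omega>)^4 + (Xi x \<omega>)^4 + (Xi y \<omega>)^4 + (Xi z \<omega>)^4) / 4 \<partial>M)"
    using amgm4 Xi4_int integrable_abs[OF X4_int[of w x y z]] by (intro integral_mono) (auto simp: X4_def)
  also have "\<dots> = m4" using Xi4_int by (simp add: Xi4_eq)
  finally show ?thesis .
qed

definition "Zt w x y z \<omega> = X4 w x y z \<omega> * PY [w,x,y,z] \<omega>"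

lemma Zt_int: "integrable M (Zt w x y z)"
  and Zt_eq: "(\<integral>\<omega>. Zt w x y z \<omega> \<partial>M) = (\<integral>\<omega>. X4 w x y z \<omega> \<partial>M) * (\<integral>\<omega>. PY [w,x,y,z] \<omega> \<partial>M)"
  using indep_int[OF Xi_indep X4_genM X4_meas X4_int PY_genM PY_meas int_PY]
  unfolding Zt_def by (auto simp: fun_eq_iff)

lemma Zt_bound: "(\<integral>\<omega>. Zt w x y z \<omega> \<partial>M) \<le> m4 * hq w x y z"
proof -
  have "(\<integral>\<omega>. Zt w x y z \<omega> \<partial>M) \<le> \<bar>\<integral>\<omega>. X4 w x y z \<omega> \<partial>M\<bar> * hq w x y z"
    unfolding Zt_eq hq_def abs_mult[symmetric] by simp
  also have "\<dots> \<le> m4 * hq w x y z" using X4_bound by (intro mult_right_mono) (auto simp: hq_def)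
  finally show ?thesis .
qed

definition "Ssum I \<omega> = (\<Sum>i\<in>I. Xi i \<omega> * Y i \<omega>)"

lemma pow4_sum:
  fixes f :: "int \<Rightarrow> real"
  shows "(sum f I)^4 = S4 I (\<lambda>w x y z. f w * f x * f y * f z)"
proof -
  have "(sum f I)^4 = sum f I * (sum f I * (sum f I * sum f I))" by (simp add: power4_eq_xxxx)
  also have "\<dots> = (\<Sum>w\<in>I. f w * (\<Sum>x\<in>I. f x * (\<Sum>y\<in>I. f y * sum f I)))" by (simp only: sum_distrib_right)
  also have "\<dots> = S4 I (\<lambda>w x y z. f w * (f x * (f y * f z)))" unfolding S4_def by (simp only: sum_distrib_left)
  finally show ?thesis by (simp add: mult.assoc)
qed

lemma Ssum4: "(Ssum I \<omega>)^4 = S4 I (\<lambda>w x y z. Zt w x y z \<omega>)"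
  unfolding Ssum_def pow4_sum Zt_def X4_def PY_def by (simp add: mult_ac)

lemma Ssum_bound:
  shows "integrable M (\<lambda>\<omega>. (Ssum I \<omega>)^4)" "(\<integral>\<omega>. (Ssum I \<omega>)^4 \<partial>M) \<le> m4 * S4 I hq"
proof -
  note [simp] = Zt_int
  show "integrable M (\<lambda>\<omega>. (Ssum I \<omega>)^4)" unfolding Ssum4 S4_def by auto
  have "(\<integral>\<omega>. (Ssum I \<omega>)^4 \<partial>M) = S4 I (\<lambda>w x y z. \<integral>\<omega>. Zt w x y z \<omega> \<partial>M)"
    unfolding Ssum4 S4_def by simp
  also have "\<dots> \<le> S4 I (\<lambda>w x y z. m4 * hq w x y z)" by (intro S4_mono Zt_bound)
  finally show "(\<integral>\<omega>. (Ssum I \<omega>)^4 \<partial>M) \<le> m4 * S4 I hq" by (simp add: S4_cmult)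
qed

end

lemma stat_distr:
  fixes X :: "int \<Rightarrow> 'a \<Rightarrow> 'b::topological_space"
  assumes st: "strictly_stationary M X" and meas: "\<And>i. X i \<in> borel_measurable M"
  shows "distr M borel (X i) = distr M borel (X 0)"
proof -
  have e: "distr M (PiM {0} (\<lambda>_. borel)) (\<lambda>\<omega>. \<lambda>j\<in>{0}. X (j + i) \<omega>) = distr M (PiM {0} (\<lambda>_. borel)) (\<lambda>\<omega>. \<lambda>j\<in>{0}. X j \<omega>)"
    using st unfolding strictly_stationary_def by blast
  have h: "(\<lambda>f. f 0) \<in> measurable (PiM {0} (\<lambda>_. borel)) (borel :: 'b measure)"
    by (rule measurable_component_singleton) simp
  have g1: "(\<lambda>\<omega>. \<lambda>j\<in>{0::int}. X (j + i) \<omega>) \<in> measurable M (PiM {0} (\<lambda>_. borel))"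
    using meas by (intro measurable_restrict) auto
  have g2: "(\<lambda>\<omega>. \<lambda>j\<in>{0::int}. X j \<omega>) \<in> measurable M (PiM {0} (\<lambda>_. borel))"
    using meas by (intro measurable_restrict) auto
  have "distr M borel (X i) = distr (distr M (PiM {0} (\<lambda>_. borel)) (\<lambda>\<omega>. \<lambda>j\<in>{0}. X (j + i) \<omega>)) borel (\<lambda>f. f 0)"
    by (subst distr_distr[OF h g1]) (simp add: comp_def)
  also have "\<dots> = distr M borel (X 0)"
    unfolding e by (subst distr_distr[OF h g2]) (simp add: comp_def)
  finally show ?thesis .
qed

lemma stat_prob:
  fixes X :: "int \<Rightarrow> 'a \<Rightarrow> 'b::topological_space"
  assumes st: "strictly_stationary M X" and meas: "\<And>i. X i \<in> borel_measurable M" and B: "B \<in> sets borel"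
  shows "measure M {\<omega>\<in>space M. X i \<omega> \<in> B} = measure M {\<omega>\<in>space M. X 0 \<omega> \<in> B}"
proof -
  have s: "\<And>j. {\<omega>\<in>space M. X j \<omega> \<in> B} = X j -` B \<inter> space M" by auto
  have "measure M {\<omega>\<in>space M. X i \<omega> \<in> B} = measure (distr M borel (X i)) B"
    unfolding s using meas B by (simp add: measure_distr)
  also have "\<dots> = measure (distr M borel (X 0)) B" by (simp only: stat_distr[OF st meas, of i])
  also have "\<dots> = measure M {\<omega>\<in>space M. X 0 \<omega> \<in> B}"
    unfolding s using meas B by (simp add: measure_distr)
  finally show ?thesis .
qed

lemma stat_int4:
  fixes X :: "int \<Rightarrow> 'a \<Rightarrow> real"
  assumes st: "strictly_stationary M X" and meas: "\<And>i. X i \<in> borel_measurable M"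
    and int0: "integrable M (\<lambda>\<omega>. (X 0 \<omega>)^4)"
  shows "integrable M (\<lambda>\<omega>. (X i \<omega>)^4)" "(\<integral>\<omega>. (X i \<omega>)^4 \<partial>M) = (\<integral>\<omega>. (X 0 \<omega>)^4 \<partial>M)"
proof -
  have f: "(\<lambda>x::real. x^4) \<in> borel_measurable borel" by measurable
  have "integrable (distr M borel (X 0)) (\<lambda>x. x^4)" using int0 by (subst integrable_distr_eq[OF meas f])
  then have "integrable (distr M borel (X i)) (\<lambda>x. x^4)" by (simp only: stat_distr[OF st meas, of i])
  then show "integrable M (\<lambda>\<omega>. (X i \<omega>)^4)" by (subst (asm) integrable_distr_eq[OF meas f])
  have "(\<integral>\<omega>. (X i \<omega>)^4 \<partial>M) = integral\<^sup>L (distr M borel (X i)) (\<lambda>x. x^4)"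
    by (rule integral_distr[OF meas f, symmetric])
  also have "\<dots> = integral\<^sup>L (distr M borel (X 0)) (\<lambda>x. x^4)" by (simp only: stat_distr[OF st meas, of i])
  also have "\<dots> = (\<integral>\<omega>. (X 0 \<omega>)^4 \<partial>M)" by (rule integral_distr[OF meas f])
  finally show "(\<integral>\<omega>. (X i \<omega>)^4 \<partial>M) = (\<integral>\<omega>. (X 0 \<omega>)^4 \<partial>M)" .
qed

lemma box_borel: "box_oc u v \<in> sets borel"
proof -
  have "box_oc u v = (\<Inter>j. {x. u $ j < x $ j} \<inter> {x. x $ j \<le> v $ j})"
    unfolding box_oc_def by auto
  also have "\<dots> \<in> sets borel"
  proof (rule sets.finite_INT)
    fix j
    have "open {x :: real ^ 'a. u $ j < x $ j}"
      by (intro open_Collect_less continuous_intros)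
    moreover have "closed {x :: real ^ 'a. x $ j \<le> v $ j}"
      by (intro closed_Collect_le continuous_intros)
    ultimately show "{x. u $ j < x $ j} \<inter> {x. x $ j \<le> v $ j} \<in> sets borel" by auto
  qed auto
  finally show ?thesis .
qed

lemma (in prob_space) mix_upper:
  assumes "C \<in> gen_events M X {..p}" "D \<in> gen_events M X {p + int r..}"
  shows "\<bar>prob (C \<inter> D) - prob C * prob D\<bar> \<le> mixing_coeff M X r"
proof -
  have bd: "bdd_above {\<bar>measure M (A \<inter> B) - measure M A * measure M B\<bar> | p A B.
       A \<in> gen_events M X {..p} \<and> B \<in> gen_events M X {p + int r..}}"
  proof (rule bdd_aboveI)
    fix x assume "x \<in> {\<bar>measure M (A \<inter> B) - measure M A * measure M B\<bar> | p A B.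
       A \<in> gen_events M X {..p} \<and> B \<in> gen_events M X {p + int r..}}"
    then obtain A B where x: "x = \<bar>prob (A \<inter> B) - prob A * prob B\<bar>" by auto
    have "0 \<le> prob A * prob B" "prob A * prob B \<le> 1" by (auto intro: mult_le_one)
    then show "x \<le> 1" unfolding x using measure_nonneg[of M "A \<inter> B"] prob_le_1[of "A \<inter> B"] by linarith
  qed
  show ?thesis unfolding mixing_coeff_def by (rule cSup_upper[OF _ bd]) (use assms in blast)
qed


context xisetup begin

lemma m4_nonneg: "0 \<le> m4"
  using Xi4_eq[of 0] by (metis integral_nonneg_AE AE_I2 zero_le_power_eq_numeral even_numeral) 

lemma final_bound:
  assumes fin: "finite I" and th: "0 < th" "th < 1" "(1 - th) * a > 3" and Bm: "m4 \<le> B'"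
  shows "integrable M (\<lambda>\<omega>. (Ssum I \<omega>)^4)"
    "(\<integral>\<omega>. (Ssum I \<omega>)^4 \<partial>M) \<le> B' * (256 * (32 * real (card I) * (cV th)^3 * nu powr th + 12 * (real (card I))^2 * (cD th)^2 * (nu powr th)^2))"
proof -
  show "integrable M (\<lambda>\<omega>. (Ssum I \<omega>)^4)" by (rule Ssum_bound(1))
  have S0: "0 \<le> S4 I hq" unfolding S4_def hq_def by (intro sum_nonneg) auto
  have "(\<integral>\<omega>. (Ssum I \<omega>)^4 \<partial>M) \<le> m4 * S4 I hq" by (rule Ssum_bound(2))
  also have "\<dots> \<le> B' * S4 I hq" using Bm S0 by (rule mult_right_mono)
  also have "\<dots> \<le> B' * (256 * (32 * real (card I) * (cV th)^3 * nu powr th + 12 * (real (card I))^2 * (cD th)^2 * (nu powr th)^2))"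
    using m4_nonneg Bm by (intro mult_left_mono S4_hq_bound[OF fin th]) auto
  finally show "(\<integral>\<omega>. (Ssum I \<omega>)^4 \<partial>M) \<le> B' * (256 * (32 * real (card I) * (cV th)^3 * nu powr th + 12 * (real (card I))^2 * (cD th)^2 * (nu powr th)^2))" .
qed

end

theorem lemmaA2:
  fixes M :: "'a measure"
    and U :: "int \<Rightarrow> 'a \<Rightarrow> real ^ 'd"
    and Xi :: "nat \<Rightarrow> int \<Rightarrow> 'a \<Rightarrow> real"
    and a q :: real
  assumes "prob_space M"
    and U_meas: "\<And>i. U i \<in> borel_measurable M"
    and U_stat: "strictly_stationary M U"
    and U_copula: "\<And>j x. 0 \<le> x \<Longrightarrow> x \<le> 1 \<Longrightarrow> measure M {\<omega>\<in>space M. U 0 \<omega> $ j \<le> x} = x"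
    and a_gt: "a > 6"
    and mixing: "\<exists>K. \<forall>r\<ge>1. mixing_coeff M U r \<le> K * real r powr (- a)"
    and Xi_meas: "\<And>n i. Xi n i \<in> borel_measurable M"
    and Xi_stat: "\<And>n. strictly_stationary M (Xi n)"
    and Xi_indep: "\<And>n. prob_space.indep_set M (gen_events M (Xi n) UNIV) (gen_events M U UNIV)"
    and Xi_int: "\<And>n. integrable M (Xi n 0)"
    and Xi_mean: "\<And>n. (\<integral>\<omega>. Xi n 0 \<omega> \<partial>M) = 0"
    and Xi_var: "\<And>n. (\<integral>\<omega>. (Xi n 0 \<omega>)\<^sup>2 \<partial>M) > 0"
    and Xi_moments: "\<And>\<nu>. \<nu> \<ge> 1 \<Longrightarrow> \<exists>B. \<forall>n\<ge>1.
        integrable M (\<lambda>\<omega>. \<bar>Xi n 0 \<omega>\<bar> powr \<nu>) \<and> (\<integral>\<omega>. \<bar>Xi n 0 \<omega>\<bar> powr \<nu> \<partial>M) \<le> B"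
    and q_gt: "2 * a / (a - 3) < q" and q_lt: "q < 4"
  shows "\<exists>\<kappa>>0. \<forall>n\<ge>1. \<forall>s t u v.
     0 \<le> s \<longrightarrow> s \<le> t \<longrightarrow> t \<le> 1 \<longrightarrow> (\<forall>j. 0 \<le> u $ j \<and> u $ j \<le> v $ j \<and> v $ j \<le> 1) \<longrightarrow>
       (let A = box_oc u v; \<nu>A = measure M {\<omega>\<in>space M. U 1 \<omega> \<in> A} in
        integrable M (\<lambda>\<omega>. (Btilde M U Xi n s t A \<omega>) ^ 4) \<and>
        (\<integral>\<omega>. (Btilde M U Xi n s t A \<omega>) ^ 4 \<partial>M)
          \<le> \<kappa> * ((lambda_n n s t)\<^sup>2 * \<nu>A powr (4 / q) + lambda_n n s t * \<nu>A powr (2 / q) / real n))"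
proof -
  interpret P: prob_space M by (rule assms(1))
  from mixing obtain K0 where K0: "\<forall>r\<ge>1. mixing_coeff M U r \<le> K0 * real r powr (- a)" by blast
  define K where "K = max K0 0"
  have Kpos: "0 \<le> K" by (simp add: K_def)
  have mixK: "\<bar>P.prob (C \<inter> D) - P.prob C * P.prob D\<bar> \<le> K * real r powr (-a)"
    if "r \<ge> 1" "C \<in> gen_events M U {..p}" "D \<in> gen_events M U {p + int r..}" for p r C D
  proof -
    have "\<bar>P.prob (C \<inter> D) - P.prob C * P.prob D\<bar> \<le> mixing_coeff M U r" by (rule P.mix_upper[OF that(2,3)])
    also have "\<dots> \<le> K0 * real r powr (-a)" using K0 that(1) by auto
    also have "\<dots> \<le> K * real r powr (-a)" by (intro mult_right_mono) (auto simp: K_def)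
    finally show ?thesis .
  qed
  from Xi_moments[of 4] obtain B where B: "\<forall>n\<ge>1. integrable M (\<lambda>\<omega>. \<bar>Xi n 0 \<omega>\<bar> powr 4) \<and> (\<integral>\<omega>. \<bar>Xi n 0 \<omega>\<bar> powr 4 \<partial>M) \<le> B"
    by auto
  have pw: "\<bar>x\<bar> powr 4 = x^4" for x :: real by simp
  define B' where "B' = max B 0"
  have a3: "a - 3 > 0" using a_gt by simp
  have q2a: "2 * a < q * (a - 3)" using q_gt a3 by (simp add: divide_less_eq)
  have qpos: "q > 2"
  proof -
    have "2 * a / (a - 3) > 2" using a3 by (simp add: less_divide_eq)
    then show ?thesis using q_gt by simp
  qed
  define th where "th = 2 / q"
  have th0: "0 < th" and th1: "th < 1" using qpos by (auto simp: th_def)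
  have th3: "(1 - th) * a > 3"
  proof -
    have "2 * a / q < a - 3" using q2a qpos by (simp add: divide_less_eq mult.commute)
    then show ?thesis by (simp add: th_def algebra_simps)
  qed
  define CD where "CD = 1 + K powr ((1 - th) * 1) * (\<Sum>g. real g powr (- ((1 - th) * a * 1)))"
  define CV where "CV = 1 + (K * 3 powr a) powr ((1 - th) * (1/3)) * (\<Sum>g. real g powr (- ((1 - th) * a * (1/3))))"
  have CD1: "1 \<le> CD"
  proof -
    have "summable (\<lambda>g::nat. real g powr (- ((1 - th) * a * 1)))" using th3 by (subst summable_real_powr_iff) auto
    then have "0 \<le> (\<Sum>g. real g powr (- ((1 - th) * a * 1)))" by (intro suminf_nonneg) auto
    then show ?thesis unfolding CD_def by simp
  qed
  have CV1: "1 \<le> CV"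
  proof -
    have "summable (\<lambda>g::nat. real g powr (- ((1 - th) * a * (1/3))))" using th3 by (subst summable_real_powr_iff) auto
    then have "0 \<le> (\<Sum>g. real g powr (- ((1 - th) * a * (1/3))))" by (intro suminf_nonneg) auto
    then show ?thesis unfolding CV_def by simp
  qed
  define \<kappa> where "\<kappa> = 256 * (B' + 1) * (32 * CV^3 + 12 * CD^2) + 1"
  have kpos: "\<kappa> > 0" unfolding \<kappa>_def B'_def using CD1 CV1 by (intro add_nonneg_pos mult_nonneg_nonneg) auto
  show ?thesis
  proof (intro exI[of _ \<kappa>] conjI allI impI kpos)
    fix n :: nat and s t :: real and u v :: "real ^ 'd"
    assume n: "1 \<le> n" and s0: "0 \<le> s" and st: "s \<le> t" and t1: "t \<le> 1" and uv: "\<forall>j. 0 \<le> u $ j \<and> u $ j \<le> v $ j \<and> v $ j \<le> 1"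
    define A where "A = box_oc u v"
    define m4 where "m4 = (\<integral>\<omega>. (Xi n 0 \<omega>)^4 \<partial>M)"
    have Xint0: "integrable M (\<lambda>\<omega>. (Xi n 0 \<omega>)^4)" using B n pw by auto
    have m4B: "m4 \<le> B'" using B n pw by (auto simp: m4_def B'_def)
    interpret L: xisetup M U A K a "Xi n" m4
    proof (unfold_locales)
      show "\<And>i. U i \<in> borel_measurable M" by (rule U_meas)
      show "A \<in> sets borel" unfolding A_def by (rule box_borel)
      show "0 \<le> K" by (rule Kpos)
      show "0 < a" using a_gt by simp
      show "\<And>i. P.prob {\<omega> \<in> space M. U i \<omega> \<in> A} = P.prob {\<omega> \<in> space M. U 1 \<omega> \<in> A}"
      proof -
        fix i
        have e: "P.prob {\<omega> \<in> space M. U j \<omega> \<in> A} = P.prob {\<omega> \<in> space M. U 0 \<omega> \<in> A}" for j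
          unfolding A_def by (rule stat_prob[OF U_stat U_meas box_borel])
        show "P.prob {\<omega> \<in> space M. U i \<omega> \<in> A} = P.prob {\<omega> \<in> space M. U 1 \<omega> \<in> A}"
          using e[of i] e[of 1] by linarith
      qed
      show "\<And>p r C D. 1 \<le> r \<Longrightarrow> C \<in> gen_events M U {..p} \<Longrightarrow> D \<in> gen_events M U {p + int r..}
        \<Longrightarrow> \<bar>P.prob (C \<inter> D) - P.prob C * P.prob D\<bar> \<le> K * real r powr - a"
        by (rule mixK)
      show "\<And>i. Xi n i \<in> borel_measurable M" by (rule Xi_meas)
      show "\<And>i. integrable M (\<lambda>\<omega>. (Xi n i \<omega>)^4)" by (rule stat_int4(1)[OF Xi_stat Xi_meas Xint0])
      show "\<And>i. (\<integral>\<omega>. (Xi n i \<omega>)^4 \<partial>M) = m4" unfolding m4_def by (rule stat_int4(2)[OF Xi_stat Xi_meas Xint0])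
      show "P.indep_set (gen_events M (Xi n) UNIV) (gen_events M U UNIV)" by (rule Xi_indep)
    qed
    define lo where "lo = \<lfloor>real n * s\<rfloor>"
    define hi where "hi = \<lfloor>real n * t\<rfloor>"
    define I where "I = {lo<..hi}"
    have fin: "finite I" by (simp add: I_def)
    have lohi: "lo \<le> hi" unfolding lo_def hi_def using st by (intro floor_mono mult_left_mono) auto
    have cardI: "real (card I) = real_of_int (hi - lo)" using lohi by (simp add: I_def)
    have lam: "lambda_n n s t = real (card I) / real n" by (simp add: lambda_n_def cardI lo_def hi_def)
    have nuA: "measure M {\<omega>\<in>space M. U 1 \<omega> \<in> A} = L.nu" by (simp add: L.nu_def L.E_def)
    have Bt: "Btilde M U Xi n s t A \<omega> = L.Ssum I \<omega> / sqrt (real n)" if "\<omega> \<in> space M" for \<omega>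
      unfolding Btilde_def L.Ssum_def L.Y_def nuA
      using that by (intro arg_cong2[where f="(/)"] sum.cong) (auto simp: I_def lo_def hi_def L.E_def indicator_def)
    have sq4: "(sqrt (real n))^4 = (real n)^2"
    proof -
      have "(sqrt (real n))^4 = (sqrt (real n))^(2*2)" by simp
      also have "\<dots> = ((sqrt (real n))^2)^2" by (rule power_mult)
      also have "\<dots> = (real n)^2" by simp
      finally show ?thesis .
    qed
    have B4: "(Btilde M U Xi n s t A \<omega>)^4 = (L.Ssum I \<omega>)^4 / (real n)^2" if "\<omega> \<in> space M" for \<omega>
      using Bt[OF that] by (simp add: power_divide sq4)
    note fb = L.final_bound[OF fin th0 th1 th3 m4B]
    have cD: "L.cD th = CD" by (simp add: L.cD_def CD_def)
    have cV: "L.cV th = CV" by (simp add: L.cV_def CV_def L.K3_def)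
    have int4: "integrable M (\<lambda>\<omega>. (Btilde M U Xi n s t A \<omega>)^4)"
      by (rule Bochner_Integration.integrable_cong[OF refl B4, THEN iffD2]) (auto intro: fb(1))
    have I4: "(\<integral>\<omega>. (Btilde M U Xi n s t A \<omega>)^4 \<partial>M) = (\<integral>\<omega>. (L.Ssum I \<omega>)^4 \<partial>M) / (real n)^2"
      using B4 by (simp add: Bochner_Integration.integral_cong[OF refl B4])
    define c where "c = real (card I)"
    define w where "w = L.nu powr th"
    define N where "N = real n"
    have c0: "0 \<le> c" and w0: "0 \<le> w" and N0: "0 < N" using n by (auto simp: c_def w_def N_def)
    have B'0: "0 \<le> B'" by (simp add: B'_def)
    have w2: "L.nu powr (4 / q) = w^2"
    proof (cases "L.nu = 0")
      case True then show ?thesis using qpos th0 by (simp add: w_def)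
    next
      case False then show ?thesis by (simp add: w_def powr_power th_def)
    qed
    have w1: "L.nu powr (2 / q) = w" by (simp add: w_def th_def)
    have key: "B' * (256 * (32 * c * CV^3 * w + 12 * c^2 * CD^2 * w^2)) \<le> \<kappa> * (c^2 * w^2 + c * w)"
    proof -
      have cv3: "0 \<le> CV^3" and cd2: "0 \<le> CD^2" using CV1 by auto
      have k1: "B' * (256 * 32 * CV^3) \<le> \<kappa>"
      proof -
        have "B' * (256 * 32 * CV^3) \<le> (B' + 1) * (256 * 32 * CV^3)" using cv3 by (intro mult_right_mono) auto
        also have "\<dots> \<le> (B' + 1) * (256 * (32 * CV^3 + 12 * CD^2))" using B'0 cd2 by (intro mult_left_mono) auto
        also have "\<dots> = 256 * (B' + 1) * (32 * CV^3 + 12 * CD^2)" by (simp add: algebra_simps)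
        finally show ?thesis unfolding \<kappa>_def by linarith
      qed
      have k2: "B' * (256 * 12 * CD^2) \<le> \<kappa>"
      proof -
        have "B' * (256 * 12 * CD^2) \<le> (B' + 1) * (256 * 12 * CD^2)" using cd2 by (intro mult_right_mono) auto
        also have "\<dots> \<le> (B' + 1) * (256 * (32 * CV^3 + 12 * CD^2))" using B'0 cv3 by (intro mult_left_mono) auto
        also have "\<dots> = 256 * (B' + 1) * (32 * CV^3 + 12 * CD^2)" by (simp add: algebra_simps)
        finally show ?thesis unfolding \<kappa>_def by linarith
      qed
      have "B' * (256 * (32 * c * CV^3 * w + 12 * c^2 * CD^2 * w^2)) = (B' * (256 * 32 * CV^3)) * (c * w) + (B' * (256 * 12 * CD^2)) * (c^2 * w^2)"
        by (simp add: algebra_simps)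
      also have "\<dots> \<le> \<kappa> * (c * w) + \<kappa> * (c^2 * w^2)"
        using k1 k2 c0 w0 by (intro add_mono mult_right_mono) auto
      finally show ?thesis by (simp add: algebra_simps)
    qed
    have "(\<integral>\<omega>. (Btilde M U Xi n s t A \<omega>)^4 \<partial>M) \<le> B' * (256 * (32 * c * CV^3 * w + 12 * c^2 * CD^2 * w^2)) / N^2"
      unfolding I4 N_def using fb(2) by (intro divide_right_mono) (auto simp: cD cV c_def w_def mult_ac)
    also have "\<dots> \<le> \<kappa> * (c^2 * w^2 + c * w) / N^2"
      using key by (intro divide_right_mono) auto
    also have "\<dots> = \<kappa> * ((c / N)^2 * w^2 + (c / N) * w / N)"
      using N0 by (simp add: field_simps power2_eq_square)
    finally have fin_b: "(\<integral>\<omega>. (Btilde M U Xi n s t A \<omega>)^4 \<partial>M) \<le> \<kappa> * ((lambda_n n s t)\<^sup>2 * L.nu powr (4 / q) + lambda_n n s t * L.nu powr (2 / q) / real n)"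
      unfolding lam w2 w1 c_def N_def .
    show "let A = box_oc u v; \<nu>A = measure M {\<omega>\<in>space M. U 1 \<omega> \<in> A} in
        integrable M (\<lambda>\<omega>. (Btilde M U Xi n s t A \<omega>) ^ 4) \<and>
        (\<integral>\<omega>. (Btilde M U Xi n s t A \<omega>) ^ 4 \<partial>M)
          \<le> \<kappa> * ((lambda_n n s t)\<^sup>2 * \<nu>A powr (4 / q) + lambda_n n s t * \<nu>A powr (2 / q) / real n)"
      unfolding Let_def A_def[symmetric] nuA using int4 fin_b by simp
  qed
qed

end
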